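(* Let $n,m\ge 4$ be integers with $n\equiv 0\pmod 4$ and $m\equiv 0 \pmod 4$. Then $\gamma_t(C_n\times C_m)=\gamma_p(C_n\times C_m)=\frac{nm}{4}$.
   Context: All graphs are finite, simple and undirected. $C_n$ denotes the cycle of order $n$ and $G\times H$ the Cartesian product of graphs. For a graph $G$ without isolated vertices: a set $D\subseteq V(G)$ is a total dominating set if every vertex of $G$ (including those in $D$) has a neighbour in $D$; $\gamma_t(G)$ is the minimum size of a total dominating set. A set $D\subseteq V(G)$ is a paired dominating set if every vertex outside $D$ has a neighbour in $D$ and the induced subgraph $G[D]$ has a perfect matching; $\gamma_p(G)$ is the minimum size of a paired dominating set. *)

theory Defs
  imports Main
begin

text \<open>A (finite simple) graph is given by a vertex set V and a symmetric,
irreflexive adjacency relation E on V.\<close>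

definition cycle_adj :: "nat \<Rightarrow> nat \<Rightarrow> nat \<Rightarrow> bool" where
  "cycle_adj n i j \<longleftrightarrow> i < n \<and> j < n \<and> (j = (i + 1) mod n \<or> i = (j + 1) mod n)"

definition cycle_V :: "nat \<Rightarrow> nat set" where
  "cycle_V n = {0..<n}"

definition cart_V :: "'a set \<Rightarrow> 'b set \<Rightarrow> ('a \<times> 'b) set" where
  "cart_V V1 V2 = V1 \<times> V2"

definition cart_adj :: "('a \<Rightarrow> 'a \<Rightarrow> bool) \<Rightarrow> ('b \<Rightarrow> 'b \<Rightarrow> bool) \<Rightarrow> ('a \<times> 'b) \<Rightarrow> ('a \<times> 'b) \<Rightarrow> bool" where
  "cart_adj E1 E2 x y \<longleftrightarrow> (fst x = fst y \<and> E2 (snd x) (snd y)) \<or> (snd x = snd y \<and> E1 (fst x) (fst y))"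

definition total_dominating :: "'a set \<Rightarrow> ('a \<Rightarrow> 'a \<Rightarrow> bool) \<Rightarrow> 'a set \<Rightarrow> bool" where
  "total_dominating V E D \<longleftrightarrow> D \<subseteq> V \<and> (\<forall>v\<in>V. \<exists>u\<in>D. E v u)"

definition gamma_t :: "'a set \<Rightarrow> ('a \<Rightarrow> 'a \<Rightarrow> bool) \<Rightarrow> nat" where
  "gamma_t V E = Min (card ` {D. total_dominating V E D})"

definition perfect_matching_induced :: "('a \<Rightarrow> 'a \<Rightarrow> bool) \<Rightarrow> 'a set \<Rightarrow> 'a set set \<Rightarrow> bool" where
  "perfect_matching_induced E D M \<longleftrightarrow>
     (\<forall>e\<in>M. \<exists>u v. e = {u, v} \<and> u \<in> D \<and> v \<in> D \<and> E u v) \<and>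
     (\<forall>e\<in>M. \<forall>e'\<in>M. e \<noteq> e' \<longrightarrow> e \<inter> e' = {}) \<and>
     \<Union>M = D"

definition paired_dominating :: "'a set \<Rightarrow> ('a \<Rightarrow> 'a \<Rightarrow> bool) \<Rightarrow> 'a set \<Rightarrow> bool" where
  "paired_dominating V E D \<longleftrightarrow> D \<subseteq> V \<and> (\<forall>v\<in>V - D. \<exists>u\<in>D. E v u) \<and>
     (\<exists>M. perfect_matching_induced E D M)"

definition gamma_p :: "'a set \<Rightarrow> ('a \<Rightarrow> 'a \<Rightarrow> bool) \<Rightarrow> nat" where
  "gamma_p V E = Min (card ` {D. paired_dominating V E D})"

end

theory Submission
  imports Defs
begin

lemma cyc_back:
  assumes "cycle_adj n i j"
  shows "i = (j+1) mod n \<or> i = (j+n-1) mod n"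
proof -
  have ij: "i < n" "j < n" using assms by (auto simp: cycle_adj_def)
  show ?thesis
  proof (cases "j = (i+1) mod n")
    case True
    show ?thesis
    proof (cases "i+1 < n")
      case True
      then have "j = i+1" using \<open>j = (i+1) mod n\<close> by simp
      then show ?thesis using ij by simp
    next
      case False
      then have "i = n-1" using ij by simp
      then have "j = 0" using \<open>j = (i+1) mod n\<close> ij by simp
      then show ?thesis using \<open>i = n-1\<close> ij by simp
    qed
  next
    case False
    then show ?thesis using assms by (auto simp: cycle_adj_def)
  qed
qed

lemma cyc_succ: "i < n \<Longrightarrow> 3 \<le> n \<Longrightarrow> cycle_adj n i ((i+1) mod n)"
  by (simp add: cycle_adj_def)

lemma cyc_pred: "i < n \<Longrightarrow> 3 \<le> n \<Longrightarrow> cycle_adj n i ((i+n-1) mod n)"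
proof -
  assume a: "i < n" "3 \<le> n"
  have "i = ((i+n-1) mod n + 1) mod n"
  proof (cases "i = 0")
    case True then show ?thesis using a by simp
  next
    case False
    then have "(i+n-1) mod n = i - 1" using a
      by (metis Nat.add_diff_assoc2 One_nat_def Suc_leI add.commute less_imp_diff_less mod_add_self2 mod_less neq0_conv)
    then show ?thesis using a False by simp
  qed
  then show ?thesis using a by (simp add: cycle_adj_def)
qed

lemma succ_mod4: "4 dvd (n::nat) \<Longrightarrow> (i+1) mod n mod 4 = (i+1) mod 4"
  by (simp add: mod_mod_cancel)

lemma pred_mod4: "4 dvd (n::nat) \<Longrightarrow> 0 < n \<Longrightarrow> (i+n-1) mod n mod 4 = (i+3) mod 4"
proof -
  assume a: "4 dvd n" "0 < n"
  have "(i+n-1) mod n mod 4 = (i+n-1) mod 4" using a by (simp add: mod_mod_cancel)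
  also have "\<dots> = (i+3) mod 4"
  proof -
    obtain k where k: "n = 4*k" using a by (auto simp: dvd_def)
    then have "k \<ge> 1" using a by simp
    then have "i+n-1 = (i+3) + 4*(k-1)" using k by simp
    then show ?thesis by simp
  qed
  finally show ?thesis .
qed

lemma card_mod4:
  assumes "4 dvd n" "r < (4::nat)"
  shows "card {i. i < n \<and> i mod 4 = r} = n div 4"
proof -
  have "{i. i < n \<and> i mod 4 = r} = (\<lambda>k. 4*k + r) ` {..<n div 4}"
  proof (rule set_eqI, rule iffI)
    fix i assume "i \<in> {i. i < n \<and> i mod 4 = r}"
    then have i: "i < n" "i mod 4 = r" by auto
    have "i = 4*(i div 4) + r" using i(2) by (metis add.commute mod_mult_div_eq)
    moreover have "i div 4 < n div 4" using i assms
      by (metis div_less_mono less_mult_imp_div_less mult.commute dvd_mult_div_cancel)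
    ultimately show "i \<in> (\<lambda>k. 4*k + r) ` {..<n div 4}" by blast
  next
    fix i assume "i \<in> (\<lambda>k. 4*k + r) ` {..<n div 4}"
    then obtain k where k: "k < n div 4" "i = 4*k+r" by auto
    then have "4*k + 4 \<le> n" using assms by (metis Suc_leI dvd_mult_div_cancel mult_Suc_right mult_le_mono2 add.commute)
    then show "i \<in> {i. i < n \<and> i mod 4 = r}" using k assms by auto
  qed
  moreover have "inj_on (\<lambda>k. 4*k + r) {..<n div 4}" by (auto simp: inj_on_def)
  ultimately show ?thesis by (simp add: card_image)
qed

lemma cyc_sym: "cycle_adj n i j \<Longrightarrow> cycle_adj n j i"
  unfolding cycle_adj_def by blast

lemma cart_sym: "cart_adj (cycle_adj n) (cycle_adj m) x y \<Longrightarrow> cart_adj (cycle_adj n) (cycle_adj m) y x"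
  unfolding cart_adj_def using cyc_sym by metis

lemma paired_total: "paired_dominating V (cart_adj (cycle_adj n) (cycle_adj m)) D
   \<Longrightarrow> total_dominating V (cart_adj (cycle_adj n) (cycle_adj m)) D"
proof -
  let ?E = "cart_adj (cycle_adj n) (cycle_adj m)"
  assume p: "paired_dominating V ?E D"
  then obtain M where M: "perfect_matching_induced ?E D M" unfolding paired_dominating_def by blast
  have M1: "\<forall>e\<in>M. \<exists>u w. e = {u, w} \<and> u \<in> D \<and> w \<in> D \<and> ?E u w"
    using M unfolding perfect_matching_induced_def by (rule conjunct1)
  have M3: "\<Union>M = D"
    using M unfolding perfect_matching_induced_def by (rule conjunct2[THEN conjunct2])
  have p2: "\<forall>v\<in>V - D. \<exists>u\<in>D. ?E v u" using p unfolding paired_dominating_def by (rule conjunct2[THEN conjunct1])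
  have "\<exists>u\<in>D. ?E v u" if v: "v \<in> V" for v
  proof (cases "v \<in> D")
    case False then show ?thesis using p2 v by blast
  next
    case True
    then obtain e where e: "e \<in> M" "v \<in> e" using M3 by blast
    then obtain x y where xy: "e = {x,y}" "x \<in> D" "y \<in> D" "?E x y"
      using M1 by blast
    show ?thesis
    proof (cases "v = x")
      case True then show ?thesis using xy by blast
    next
      case False then have "v = y" using e xy by blast
      then show ?thesis using xy cart_sym[of n m x y] by blast
    qed
  qed
  moreover have "D \<subseteq> V" using p unfolding paired_dominating_def by (rule conjunct1)
  ultimately show ?thesis unfolding total_dominating_def by blast
qed

lemma cyc_self: "2 \<le> n \<Longrightarrow> \<not> cycle_adj n c c"
proof
  assume a: "2 \<le> n" "cycle_adj n c c"
  then have c: "c < n" "c = (c+1) mod n" by (auto simp: cycle_adj_def)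
  show False
  proof (cases "c+1 < n")
    case True then show False using c by simp
  next
    case False then have "c+1 = n" using c by simp
    then show False using c a by simp
  qed
qed

lemma lower:
  assumes "total_dominating (cart_V (cycle_V n) (cycle_V m)) (cart_adj (cycle_adj n) (cycle_adj m)) D"
    and "2 \<le> n" "2 \<le> m"
  shows "n * m \<le> 4 * card D"
proof -
  let ?V = "cart_V (cycle_V n) (cycle_V m)"
  let ?E = "cart_adj (cycle_adj n) (cycle_adj m)"
  define N where "N u = {((fst u+1) mod n, snd u), ((fst u+n-1) mod n, snd u),
     (fst u, (snd u+1) mod m), (fst u, (snd u+m-1) mod m)}" for u :: "nat \<times> nat"
  have fin: "finite ?V" by (simp add: cart_V_def cycle_V_def)
  have D: "D \<subseteq> ?V" using assms by (auto simp: total_dominating_def)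
  then have finD: "finite D" using fin finite_subset by blast
  have "?V \<subseteq> (\<Union>u\<in>D. N u)"
  proof
    fix v assume v: "v \<in> ?V"
    then obtain u where u: "u \<in> D" "?E v u" using assms by (auto simp: total_dominating_def)
    obtain a b where ab: "v = (a,b)" by fastforce
    obtain c d where cd: "u = (c,d)" by fastforce
    have "v \<in> N u"
    proof (cases "a = c")
      case True
      have "\<not> cycle_adj n c c" using cyc_self[of n c] assms(2) by simp
      then have "cycle_adj m b d" using u ab cd True by (auto simp: cart_adj_def)
      then show ?thesis using cyc_back[of m b d] True ab cd by (auto simp: N_def)
    next
      case False
      then have "cycle_adj n a c" "b = d" using u ab cd by (auto simp: cart_adj_def)
      then show ?thesis using cyc_back[of n a c] ab cd by (auto simp: N_def)
    qed
    then show "v \<in> (\<Union>u\<in>D. N u)" using u by blast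
  qed
  then have "card ?V \<le> card (\<Union>u\<in>D. N u)"
    by (intro card_mono) (auto simp: N_def finD)
  also have "\<dots> \<le> (\<Sum>u\<in>D. card (N u))" by (rule card_UN_le[OF finD])
  also have "\<dots> \<le> (\<Sum>u\<in>D. 4)"
  proof (rule sum_mono)
    fix u
    show "card (N u) \<le> 4" unfolding N_def
      using card_length[of "[((fst u+1) mod n, snd u), ((fst u+n-1) mod n, snd u),
     (fst u, (snd u+1) mod m), (fst u, (snd u+m-1) mod m)]"] by simp
  qed
  also have "\<dots> = 4 * card D" by simp
  finally show ?thesis by (simp add: cart_V_def cycle_V_def card_cartesian_product)
qed


definition Pset :: "(nat \<times> nat) set" where "Pset = {(0,0),(0,1),(2,2),(2,3)}"

definition D0 :: "nat \<Rightarrow> nat \<Rightarrow> (nat \<times> nat) set" where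
  "D0 n m = {v \<in> cart_V (cycle_V n) (cycle_V m). (fst v mod 4, snd v mod 4) \<in> Pset}"

lemma resid: "r < 4 \<Longrightarrow> s < (4::nat) \<Longrightarrow>
  ((r+1) mod 4, s) \<in> Pset \<or> ((r+3) mod 4, s) \<in> Pset \<or> (r, (s+1) mod 4) \<in> Pset \<or> (r, (s+3) mod 4) \<in> Pset"
proof -
  assume "r < 4" "s < 4"
  then have "r = 0 \<or> r = 1 \<or> r = 2 \<or> r = 3" "s = 0 \<or> s = 1 \<or> s = 2 \<or> s = 3" by arith+
  then show ?thesis by (elim disjE) (simp_all add: Pset_def)
qed

lemma D0_total:
  assumes "4 \<le> n" "4 \<le> m" "4 dvd n" "4 dvd m"
  shows "total_dominating (cart_V (cycle_V n) (cycle_V m)) (cart_adj (cycle_adj n) (cycle_adj m)) (D0 n m)"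
  unfolding total_dominating_def
proof (intro conjI ballI)
  show "D0 n m \<subseteq> cart_V (cycle_V n) (cycle_V m)" by (auto simp: D0_def)
next
  fix v assume v: "v \<in> cart_V (cycle_V n) (cycle_V m)"
  obtain a b where ab: "v = (a,b)" by fastforce
  have a: "a < n" "b < m" using v ab by (auto simp: cart_V_def cycle_V_def)
  have n0: "0 < n" "0 < m" using assms by auto
  have n3: "3 \<le> n" and m3: "3 \<le> m" using assms by auto
  have s1: "(a+1) mod n < n" "(a+n-1) mod n < n" "(b+1) mod m < m" "(b+m-1) mod m < m"
    using n0 by auto
  have r: "(a+1) mod n mod 4 = (a+1) mod 4" "(a+n-1) mod n mod 4 = (a+3) mod 4"
      "(b+1) mod m mod 4 = (b+1) mod 4" "(b+m-1) mod m mod 4 = (b+3) mod 4"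
    using succ_mod4[OF assms(3)] succ_mod4[OF assms(4)] pred_mod4[OF assms(3) n0(1)] pred_mod4[OF assms(4) n0(2)] by blast+
  have adj: "cycle_adj n a ((a+1) mod n)" "cycle_adj n a ((a+n-1) mod n)"
     "cycle_adj m b ((b+1) mod m)" "cycle_adj m b ((b+m-1) mod m)"
    using cyc_succ[OF a(1) n3] cyc_pred[OF a(1) n3] cyc_succ[OF a(2) m3] cyc_pred[OF a(2) m3] by blast+
  have m4: "(a+1) mod 4 = (a mod 4 + 1) mod 4" "(a+3) mod 4 = (a mod 4 + 3) mod 4"
     "(b+1) mod 4 = (b mod 4 + 1) mod 4" "(b+3) mod 4 = (b mod 4 + 3) mod 4"
    by (simp_all add: mod_simps)
  have "((a mod 4 + 1) mod 4, b mod 4) \<in> Pset \<or>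
     ((a mod 4 + 3) mod 4, b mod 4) \<in> Pset \<or>
     (a mod 4, (b mod 4 + 1) mod 4) \<in> Pset \<or>
     (a mod 4, (b mod 4 + 3) mod 4) \<in> Pset" using resid[of "a mod 4" "b mod 4"] by simp
  then show "\<exists>u\<in>D0 n m. cart_adj (cycle_adj n) (cycle_adj m) v u"
  proof (elim disjE)
    assume h: "((a mod 4 + 1) mod 4, b mod 4) \<in> Pset"
    show ?thesis
    proof (rule bexI[of _ "((a+1) mod n, b)"])
      have "((a+1) mod n mod 4, b mod 4) \<in> Pset" using h r(1) m4(1) by simp
      then show "((a+1) mod n, b) \<in> D0 n m" using a s1 by (simp add: D0_def cart_V_def cycle_V_def)
      show "cart_adj (cycle_adj n) (cycle_adj m) v ((a+1) mod n, b)" using adj(1) ab by (simp add: cart_adj_def)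
    qed
  next
    assume h: "((a mod 4 + 3) mod 4, b mod 4) \<in> Pset"
    show ?thesis
    proof (rule bexI[of _ "((a+n-1) mod n, b)"])
      have "((a+n-1) mod n mod 4, b mod 4) \<in> Pset" using h r(2) m4(2) by simp
      then show "((a+n-1) mod n, b) \<in> D0 n m" using a s1 by (simp add: D0_def cart_V_def cycle_V_def)
      show "cart_adj (cycle_adj n) (cycle_adj m) v ((a+n-1) mod n, b)" using adj(2) ab by (simp add: cart_adj_def)
    qed
  next
    assume h: "(a mod 4, (b mod 4 + 1) mod 4) \<in> Pset"
    show ?thesis
    proof (rule bexI[of _ "(a, (b+1) mod m)"])
      have "(a mod 4, (b+1) mod m mod 4) \<in> Pset" using h r(3) m4(3) by simp
      then show "(a, (b+1) mod m) \<in> D0 n m" using a s1 by (simp add: D0_def cart_V_def cycle_V_def)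
      show "cart_adj (cycle_adj n) (cycle_adj m) v (a, (b+1) mod m)" using adj(3) ab by (simp add: cart_adj_def)
    qed
  next
    assume h: "(a mod 4, (b mod 4 + 3) mod 4) \<in> Pset"
    show ?thesis
    proof (rule bexI[of _ "(a, (b+m-1) mod m)"])
      have "(a mod 4, (b+m-1) mod m mod 4) \<in> Pset" using h r(4) m4(4) by simp
      then show "(a, (b+m-1) mod m) \<in> D0 n m" using a s1 by (simp add: D0_def cart_V_def cycle_V_def)
      show "cart_adj (cycle_adj n) (cycle_adj m) v (a, (b+m-1) mod m)" using adj(4) ab by (simp add: cart_adj_def)
    qed
  qed
qed

lemma D0_card:
  assumes "4 dvd n" "4 dvd m"
  shows "card (D0 n m) = n * m div 4"
proof -
  define R where "R r s = {i. i < n \<and> i mod 4 = r} \<times> {j. j < m \<and> j mod 4 = s}" for r s :: nat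
  have eq: "D0 n m = R 0 0 \<union> R 0 1 \<union> R 2 2 \<union> R 2 3"
  proof (rule set_eqI)
    fix v :: "nat \<times> nat"
    obtain a b where v: "v = (a,b)" by fastforce
    show "v \<in> D0 n m \<longleftrightarrow> v \<in> R 0 0 \<union> R 0 1 \<union> R 2 2 \<union> R 2 3"
      unfolding v D0_def R_def Pset_def cart_V_def cycle_V_def by simp blast
  qed
  have c: "r < 4 \<Longrightarrow> s < 4 \<Longrightarrow> card (R r s) = (n div 4) * (m div 4)" for r s
    using card_mod4 assms by (simp add: R_def card_cartesian_product)
  have f: "finite (R r s)" for r s by (simp add: R_def)
  have "card (D0 n m) = card (R 0 0) + card (R 0 1) + card (R 2 2) + card (R 2 3)"
  proof -
    have dj: "(r,s) \<noteq> (r',s') \<Longrightarrow> R r s \<inter> R r' s' = {}" for r s r' s'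
      by (auto simp: R_def)
    have "card (R 0 0 \<union> R 0 1 \<union> R 2 2 \<union> R 2 3) = card (R 0 0 \<union> R 0 1 \<union> R 2 2) + card (R 2 3)"
      by (rule card_Un_disjoint) (simp_all add: f Int_Un_distrib2 dj)
    also have "card (R 0 0 \<union> R 0 1 \<union> R 2 2) = card (R 0 0 \<union> R 0 1) + card (R 2 2)"
      by (rule card_Un_disjoint) (simp_all add: f Int_Un_distrib2 dj)
    also have "card (R 0 0 \<union> R 0 1) = card (R 0 0) + card (R 0 1)"
      by (rule card_Un_disjoint) (simp_all add: f Int_Un_distrib2 dj)
    finally show ?thesis unfolding eq .
  qed
  also have "\<dots> = 4 * ((n div 4) * (m div 4))" using c by simp
  also have "\<dots> = n * m div 4" using assms by (auto simp: dvd_def)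
  finally show ?thesis .
qed


lemma D0_mem: "v \<in> D0 n m \<longleftrightarrow> fst v < n \<and> snd v < m \<and>
   (fst v mod 4 = 0 \<and> snd v mod 4 = 0 \<or> fst v mod 4 = 0 \<and> snd v mod 4 = 1 \<or>
    fst v mod 4 = 2 \<and> snd v mod 4 = 2 \<or> fst v mod 4 = 2 \<and> snd v mod 4 = 3)"
  by (cases v) (simp add: D0_def Pset_def cart_V_def cycle_V_def)

lemma mod42: "(b::nat) mod 4 mod 2 = b mod 2" by (simp add: mod_mod_cancel)
lemma pm1: "(b::nat) mod 4 \<ge> 1 \<Longrightarrow> (b-1) mod 4 = b mod 4 - 1"
proof -
  assume h: "b mod 4 \<ge> 1"
  then have "b \<noteq> 0" by (cases b) auto
  then obtain c where c: "b = Suc c" by (cases b) auto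
  have "b mod 4 = (if Suc (c mod 4) = 4 then 0 else Suc (c mod 4))" unfolding c by (rule mod_Suc)
  then show ?thesis using h c by (auto split: if_splits)
qed
lemma pp1: "(b::nat) mod 4 < 3 \<Longrightarrow> (b+1) mod 4 = b mod 4 + 1"
  by (simp add: mod_Suc)
lemma lt: "b < (m::nat) \<Longrightarrow> m mod 4 = 0 \<Longrightarrow> b mod 4 \<noteq> 3 \<Longrightarrow> b+1 < m"
proof (rule ccontr)
  assume "b < m" "m mod 4 = 0" "b mod 4 \<noteq> 3" "\<not> b + 1 < m"
  then have "m = b+1" by simp
  then show False using \<open>m mod 4 = 0\<close> \<open>b mod 4 \<noteq> 3\<close> by (simp add: mod_Suc split: if_splits)
qed
lemma par4: "(b::nat) mod 4 = 0 \<Longrightarrow> b mod 2 = 0" "(b::nat) mod 4 = 2 \<Longrightarrow> b mod 2 = 0"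
   "(b::nat) mod 4 = 1 \<Longrightarrow> b mod 2 = 1" "(b::nat) mod 4 = 3 \<Longrightarrow> b mod 2 = 1"
  using mod42[of b] by simp_all

definition M0 :: "nat \<Rightarrow> nat \<Rightarrow> (nat \<times> nat) set set" where
  "M0 n m = (\<lambda>v. {v, (fst v, snd v + 1)}) ` {v \<in> D0 n m. snd v mod 2 = 0}"

lemma M0_edge:
  assumes "m mod 4 = 0" "(a,b) \<in> D0 n m" "b mod 2 = 0"
  shows "(a, b+1) \<in> D0 n m" "cart_adj (cycle_adj n) (cycle_adj m) (a,b) (a,b+1)"
proof -
  have h0: "a < n" "b < m" "a mod 4 = 0 \<and> b mod 4 = 0 \<or> a mod 4 = 0 \<and> b mod 4 = 1 \<or>
    a mod 4 = 2 \<and> b mod 4 = 2 \<or> a mod 4 = 2 \<and> b mod 4 = 3"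
    using assms(2) unfolding D0_mem by simp_all
  have h3: "a mod 4 = 0 \<and> b mod 4 = 0 \<or> a mod 4 = 2 \<and> b mod 4 = 2"
    using h0(3) par4(3,4)[of b] assms(3) by auto
  have b1: "b + 1 < m" using lt[OF h0(2)] assms(1) h3 by auto
  have "(b+1) mod 4 = b mod 4 + 1" using h3 pp1[of b] by auto
  then have "a mod 4 = 0 \<and> (b+1) mod 4 = 1 \<or> a mod 4 = 2 \<and> (b+1) mod 4 = 3" using h3 by auto
  then show "(a, b+1) \<in> D0 n m" unfolding D0_mem using h0 b1 by auto
  have "cycle_adj m b (b+1)" using b1 by (simp add: cycle_adj_def)
  then show "cart_adj (cycle_adj n) (cycle_adj m) (a,b) (a,b+1)" by (simp add: cart_adj_def)
qed

lemma M0_elem: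
  assumes "e \<in> M0 n m"
  obtains a b where "e = {(a,b), (a,b+1)}" "(a,b) \<in> D0 n m" "b mod 2 = 0"
proof -
  from assms obtain u where u: "u \<in> {v \<in> D0 n m. snd v mod 2 = 0}" "e = {u, (fst u, snd u + 1)}"
    unfolding M0_def by (rule imageE)
  obtain a b where ab: "u = (a,b)" by fastforce
  have "e = {(a,b), (a,b+1)}" using u(2) ab by simp
  moreover have "(a,b) \<in> D0 n m" "b mod 2 = 0" using u(1) ab by auto
  ultimately show ?thesis by (rule that)
qed

lemma M0_perfect:
  assumes "m mod 4 = 0"
  shows "perfect_matching_induced (cart_adj (cycle_adj n) (cycle_adj m)) (D0 n m) (M0 n m)"
  unfolding perfect_matching_induced_def
proof (intro conjI ballI impI)
  fix e assume "e \<in> M0 n m"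
  then obtain a b where ab: "e = {(a,b), (a,b+1)}" "(a,b) \<in> D0 n m" "b mod 2 = 0"
    by (rule M0_elem)
  show "\<exists>u v. e = {u, v} \<and> u \<in> D0 n m \<and> v \<in> D0 n m \<and> cart_adj (cycle_adj n) (cycle_adj m) u v"
  proof (intro exI conjI)
    show "e = {(a,b), (a,b+1)}" by (rule ab(1))
    show "(a,b) \<in> D0 n m" by (rule ab(2))
    show "(a,b+1) \<in> D0 n m" by (rule M0_edge(1)[OF assms ab(2,3)])
    show "cart_adj (cycle_adj n) (cycle_adj m) (a,b) (a,b+1)" by (rule M0_edge(2)[OF assms ab(2,3)])
  qed
next
  fix e e' assume "e \<in> M0 n m" "e' \<in> M0 n m" "e \<noteq> e'"
  note ne = \<open>e \<noteq> e'\<close>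
  obtain a b where ab: "e = {(a,b), (a,b+1)}" "b mod 2 = 0"
    using M0_elem[OF \<open>e \<in> M0 n m\<close>] by metis
  obtain c d where cd: "e' = {(c,d), (c,d+1)}" "d mod 2 = 0"
    using M0_elem[OF \<open>e' \<in> M0 n m\<close>] by metis
  show "e \<inter> e' = {}"
  proof (rule ccontr)
    assume "e \<inter> e' \<noteq> {}"
    then obtain x where "x \<in> e" "x \<in> e'" by blast
    then have "x = (a,b) \<or> x = (a,b+1)" "x = (c,d) \<or> x = (c,d+1)" using ab cd by blast+
    then have "(a = c \<and> b = d) \<or> b = d + 1 \<or> b + 1 = d" by auto
    moreover have "b \<noteq> d + 1" using ab(2) cd(2) by (auto simp: mod_Suc)
    moreover have "b + 1 \<noteq> d" using ab(2) cd(2) by (auto simp: mod_Suc)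
    ultimately have "a = c \<and> b = d" by blast
    then show False using ab cd ne by simp
  qed
next
  show "\<Union>(M0 n m) = D0 n m"
  proof
    show "\<Union>(M0 n m) \<subseteq> D0 n m"
    proof
      fix x assume "x \<in> \<Union>(M0 n m)"
      then obtain e where e: "e \<in> M0 n m" "x \<in> e" by blast
      obtain a b where ab: "e = {(a,b), (a,b+1)}" "(a,b) \<in> D0 n m" "b mod 2 = 0"
        using e(1) by (rule M0_elem)
      then have "x = (a,b) \<or> x = (a,b+1)" using e(2) by blast
      then show "x \<in> D0 n m" using M0_edge(1)[OF assms ab(2,3)] ab(2) by (elim disjE) simp_all
    qed
  next
    show "D0 n m \<subseteq> \<Union>(M0 n m)"
    proof
      fix x assume x: "x \<in> D0 n m"
      obtain a b where ab: "x = (a,b)" by fastforce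
      show "x \<in> \<Union>(M0 n m)"
      proof (cases "b mod 2 = 0")
        case True
        have "{(a,b), (fst (a,b), snd (a,b) + 1)} \<in> M0 n m"
          unfolding M0_def using x ab True by (intro imageI) simp
        then show ?thesis using ab by blast
      next
        case False
        have h0: "a < n" "b < m" "a mod 4 = 0 \<and> b mod 4 = 0 \<or> a mod 4 = 0 \<and> b mod 4 = 1 \<or>
          a mod 4 = 2 \<and> b mod 4 = 2 \<or> a mod 4 = 2 \<and> b mod 4 = 3"
          using x unfolding ab D0_mem by simp_all
        have h3: "a mod 4 = 0 \<and> b mod 4 = 1 \<or> a mod 4 = 2 \<and> b mod 4 = 3"
          using h0(3) par4(1,2)[of b] False by auto
        have pm: "(b-1) mod 4 = b mod 4 - 1" using h3 pm1[of b] by auto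
        have b0: "b \<ge> 1" using h3 by (cases b) auto
        have b2: "a mod 4 = 0 \<and> (b-1) mod 4 = 0 \<or> a mod 4 = 2 \<and> (b-1) mod 4 = 2" using h3 pm by auto
        then have b3: "(b - 1) mod 2 = 0" using par4(1,2)[of "b-1"] by auto
        have h: "a < n" "b < m" using h0 by auto
        have b1: "b \<ge> 1" "(b - 1) mod 2 = 0"
          "a mod 4 = 0 \<and> (b-1) mod 4 = 0 \<or> a mod 4 = 2 \<and> (b-1) mod 4 = 2" using b0 b3 b2 by auto
        have u: "(a, b-1) \<in> D0 n m" unfolding D0_mem using h b1 by auto
        have "x \<in> {(a, b-1), (fst (a,b-1), snd (a,b-1) + 1)}" using ab b1 by simp
        moreover have "{(a, b-1), (fst (a,b-1), snd (a,b-1) + 1)} \<in> M0 n m"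
          unfolding M0_def using u b1 by (intro imageI) simp
        ultimately show ?thesis by blast
      qed
    qed
  qed
qed

lemma D0_paired:
  assumes "4 \<le> n" "4 \<le> m" "4 dvd n" "4 dvd m"
  shows "paired_dominating (cart_V (cycle_V n) (cycle_V m)) (cart_adj (cycle_adj n) (cycle_adj m)) (D0 n m)"
proof -
  have "m mod 4 = 0" using assms(4) by simp
  then have pm: "perfect_matching_induced (cart_adj (cycle_adj n) (cycle_adj m)) (D0 n m) (M0 n m)"
    by (rule M0_perfect)
  have t: "total_dominating (cart_V (cycle_V n) (cycle_V m)) (cart_adj (cycle_adj n) (cycle_adj m)) (D0 n m)"
    by (rule D0_total[OF assms])
  show ?thesis unfolding paired_dominating_def
  proof (intro conjI)
    show "D0 n m \<subseteq> cart_V (cycle_V n) (cycle_V m)" using t unfolding total_dominating_def by (rule conjunct1)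
    show "\<forall>v\<in>cart_V (cycle_V n) (cycle_V m) - D0 n m. \<exists>u\<in>D0 n m. cart_adj (cycle_adj n) (cycle_adj m) v u"
      using t unfolding total_dominating_def by blast
    show "\<exists>M. perfect_matching_induced (cart_adj (cycle_adj n) (cycle_adj m)) (D0 n m) M"
      using pm by (rule exI)
  qed
qed

theorem lemma2p3:
  fixes n m :: nat
  assumes "n \<ge> 4" and "m \<ge> 4" and "n mod 4 = 0" and "m mod 4 = 0"
  shows "gamma_t (cart_V (cycle_V n) (cycle_V m)) (cart_adj (cycle_adj n) (cycle_adj m)) = n * m div 4
       \<and> gamma_p (cart_V (cycle_V n) (cycle_V m)) (cart_adj (cycle_adj n) (cycle_adj m)) = n * m div 4"
proof -
  let ?V = "cart_V (cycle_V n) (cycle_V m)"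
  let ?E = "cart_adj (cycle_adj n) (cycle_adj m)"
  have d: "4 dvd n" "4 dvd m" using assms by auto
  have finV: "finite ?V" by (simp add: cart_V_def cycle_V_def)
  have lb: "n * m div 4 \<le> card D" if "total_dominating ?V ?E D" for D
  proof -
    have "n * m \<le> 4 * card D" using lower[OF that] assms by simp
    then have "n * m div 4 \<le> (4 * card D) div 4" by (rule div_le_mono)
    then show ?thesis by simp
  qed
  have c0: "card (D0 n m) = n * m div 4" using D0_card[OF d] .
  have ft: "finite (card ` {D. total_dominating ?V ?E D})"
  proof -
    have "{D. total_dominating ?V ?E D} \<subseteq> Pow ?V" by (auto simp: total_dominating_def)
    then show ?thesis using finV by (meson finite_Pow_iff finite_imageI finite_subset)
  qed
  have fp: "finite (card ` {D. paired_dominating ?V ?E D})"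
  proof -
    have "{D. paired_dominating ?V ?E D} \<subseteq> Pow ?V" by (auto simp: paired_dominating_def)
    then show ?thesis using finV by (meson finite_Pow_iff finite_imageI finite_subset)
  qed
  have "gamma_t ?V ?E = n * m div 4"
    unfolding gamma_t_def
  proof (rule Min_eqI[OF ft])
    fix y assume "y \<in> card ` {D. total_dominating ?V ?E D}"
    then show "n * m div 4 \<le> y" using lb by auto
  next
    show "n * m div 4 \<in> card ` {D. total_dominating ?V ?E D}"
      using D0_total[OF assms(1,2) d] c0 by (metis (mono_tags, lifting) image_eqI mem_Collect_eq)
  qed
  moreover have "gamma_p ?V ?E = n * m div 4"
    unfolding gamma_p_def
  proof (rule Min_eqI[OF fp])
    fix y assume "y \<in> card ` {D. paired_dominating ?V ?E D}"
    then show "n * m div 4 \<le> y" using lb paired_total by blast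
  next
    show "n * m div 4 \<in> card ` {D. paired_dominating ?V ?E D}"
      using D0_paired[OF assms(1,2) d] c0 by (metis (mono_tags, lifting) image_eqI mem_Collect_eq)
  qed
  ultimately show ?thesis by simp
qed

end
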